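(* Let $1<p<2$ and $\alpha\in\mathbb R$, or $p=2$ and $\alpha\le0$. There is $C>0$ such that for all $N\ge1$, $$\sup_{A\subset\mathbb Z,\ |A|\le N}\|S_A\|_{L^p(\log L)^\alpha\to L^p(\log L)^\alpha}\le C\,N^{\frac1p-\frac12}(\log(e+N))^{-\alpha}.$$
   Context: On $\mathbb T\equiv[-\pi,\pi)$: $L^p(\log L)^\alpha(\mathbb T)$ is the Orlicz space $L^\Phi$, $\Phi(t)=\int_0^ts^{p-1}(\log(c+s))^{\alpha p}ds$ ($c>1$ fixed, large enough that $\Phi$ is a Young function), Luxemburg norm. For finite $A\subset\mathbb Z$, $S_A(g)=\sum_{n\in A}\hat g(n)e^{inx}$, where $\hat g(n)$ are the Fourier coefficients of $g\in L^1(\mathbb T)$. *)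

theory Defs
  imports "HOL-Analysis.Analysis"
begin

definition torus :: "real set" where
  "torus = {-pi..<pi}"

definition fourier_coeff :: "(real \<Rightarrow> complex) \<Rightarrow> int \<Rightarrow> complex" where
  "fourier_coeff g n =
     complex_of_real (1 / (2 * pi)) *
       set_lebesgue_integral lborel torus (\<lambda>x. g x * exp (- (\<i> * of_int n * of_real x)))"

definition partial_sum :: "int set \<Rightarrow> (real \<Rightarrow> complex) \<Rightarrow> real \<Rightarrow> complex" where
  "partial_sum A g x = (\<Sum>n\<in>A. fourier_coeff g n * exp (\<i> * of_int n * of_real x))"

definition PhiLlog :: "real \<Rightarrow> real \<Rightarrow> real \<Rightarrow> real \<Rightarrow> real" where
  "PhiLlog p \<alpha> c t = integral {0..t} (\<lambda>s. s powr (p - 1) * (ln (c + s)) powr (\<alpha> * p))"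

definition young_function :: "(real \<Rightarrow> real) \<Rightarrow> bool" where
  "young_function \<Phi> \<longleftrightarrow> \<Phi> 0 = 0 \<and> convex_on {0..} \<Phi> \<and> mono_on {0..} \<Phi>
     \<and> continuous_on {0..} \<Phi> \<and> filterlim \<Phi> at_top at_top"

definition orlicz_modular :: "(real \<Rightarrow> real) \<Rightarrow> (real \<Rightarrow> complex) \<Rightarrow> ennreal" where
  "orlicz_modular \<Phi> g = (\<integral>\<^sup>+ x\<in>torus. ennreal (\<Phi> (norm (g x))) \<partial>lborel)"

definition orlicz_space :: "(real \<Rightarrow> real) \<Rightarrow> (real \<Rightarrow> complex) set" where
  "orlicz_space \<Phi> = {g. g \<in> borel_measurable lborel \<and>
      (\<exists>l>0. orlicz_modular \<Phi> (\<lambda>x. g x / of_real l) \<le> 1)}"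

definition luxemburg_norm :: "(real \<Rightarrow> real) \<Rightarrow> (real \<Rightarrow> complex) \<Rightarrow> real" where
  "luxemburg_norm \<Phi> g = Inf {l. l > 0 \<and> orlicz_modular \<Phi> (\<lambda>x. g x / of_real l) \<le> 1}"

end

theory Submission
  imports Defs
begin


definition ff :: "real \<Rightarrow> real \<Rightarrow> real \<Rightarrow> real \<Rightarrow> real" where
  "ff p \<alpha> c s = s powr (p - 1) * (ln (c + s)) powr (\<alpha> * p)"

lemma Phi_ff: "PhiLlog p \<alpha> c t = integral {0..t} (ff p \<alpha> c)"
  unfolding PhiLlog_def ff_def by (rule refl)

lemma ff_cont:
  assumes "p > 1" "c > 1"
  shows "continuous_on {0..} (ff p \<alpha> c)"
  unfolding ff_def
proof (rule continuous_on_mult)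
  show "continuous_on {0..} (\<lambda>x::real. x powr (p - 1))"
    by (rule continuous_on_powr') (use assms in \<open>auto intro!: continuous_intros\<close>)
  show "continuous_on {0..} (\<lambda>x::real. ln (c + x) powr (\<alpha> * p))"
    by (rule continuous_on_powr) (use assms in \<open>auto intro!: continuous_intros\<close>)
qed

lemma ff_nonneg: "ff p \<alpha> c s \<ge> 0"
  unfolding ff_def by simp

lemma ff_int:
  assumes "p > 1" "c > 1" "0 \<le> a"
  shows "ff p \<alpha> c integrable_on {a..b}"
  by (rule integrable_continuous_interval, rule continuous_on_subset[OF ff_cont[OF assms(1,2)]])
     (use assms in auto)

lemma Phi_nonneg: "p > 1 \<Longrightarrow> c > 1 \<Longrightarrow> PhiLlog p \<alpha> c t \<ge> 0"
  unfolding Phi_ff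
  by (cases "0 \<le> t") (auto intro!: integral_nonneg ff_int ff_nonneg)

lemma Phi_scale:
  assumes "p > 1" "c > 1" "r > 0" "t \<ge> 0"
  shows "PhiLlog p \<alpha> c (r * t) = r * integral {0..t} (\<lambda>u. ff p \<alpha> c (r * u))"
proof -
  have "(ff p \<alpha> c has_integral PhiLlog p \<alpha> c (r*t)) {0..r*t}"
    unfolding Phi_ff using ff_int[OF assms(1,2), of 0] by (simp add: has_integral_integral)
  from has_integral_stretch_real[OF this, of r]
  have h: "((\<lambda>x. ff p \<alpha> c (r * x)) has_integral (1 / r) * PhiLlog p \<alpha> c (r*t)) ((\<lambda>x. x / r) ` {0..r*t})"
    using assms by simp
  have im: "(\<lambda>x. x / r) ` {0..r*t} = {0..t}"
  proof
    show "(\<lambda>x. x / r) ` {0..r*t} \<subseteq> {0..t}" using assms by (auto simp: field_simps)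
    show "{0..t} \<subseteq> (\<lambda>x. x / r) ` {0..r*t}"
    proof
      fix x assume "x \<in> {0..t}"
      then have "r * x \<in> {0..r*t}" "x = (r*x)/r" using assms by auto
      then show "x \<in> (\<lambda>x. x / r) ` {0..r*t}" by blast
    qed
  qed
  from h[unfolded im] have "integral {0..t} (\<lambda>u. ff p \<alpha> c (r * u)) = (1/r) * PhiLlog p \<alpha> c (r*t)"
    by (rule integral_unique)
  then show ?thesis using assms by simp
qed

lemma ln_scale_le:
  fixes c r u :: real
  assumes "c > 1" "r \<ge> 1" "u \<ge> 0"
  shows "ln (c + r*u) \<le> (1 + ln r / ln c) * ln (c + u)"
proof -
  have "c \<le> r * c" using assms mult_right_mono[of 1 r c] by simp
  then have "c + r*u \<le> r * (c + u)" using assms by (simp add: algebra_simps)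
  have ru: "r*u \<ge> 0" using assms by (intro mult_nonneg_nonneg) auto
  have "0 < c + r*u" using assms ru by linarith
  then have "ln (c + r*u) \<le> ln (r * (c+u))" using assms \<open>c + r*u \<le> r * (c + u)\<close> by (subst ln_le_cancel_iff) auto
  also have "\<dots> = ln r + ln (c+u)" using assms by (simp add: ln_mult)
  also have "ln r \<le> ln r / ln c * ln (c + u)"
  proof -
    have "ln c \<le> ln (c+u)" using assms by simp
    moreover have "ln c > 0" "ln r \<ge> 0" using assms by auto
    ultimately have "ln r * ln c \<le> ln r * ln (c+u)" by (simp add: mult_left_mono)
    then show ?thesis using \<open>ln c > 0\<close> by (simp add: field_simps)
  qed
  finally show ?thesis by (simp add: algebra_simps)
qed

lemma ff_scale_upper:
  assumes "p > 1" "c > 1" "r \<ge> 1" "u \<ge> 0"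
  shows "ff p \<alpha> c (r*u) \<le> r powr (p-1) * (1 + ln r / ln c) powr (max \<alpha> 0 * p) * ff p \<alpha> c u"
proof -
  define X where "X = 1 + ln r / ln c"
  have X1: "X \<ge> 1" using assms unfolding X_def by simp
  have ru: "r*u \<ge> 0" using assms by (intro mult_nonneg_nonneg) auto
  have "1 < c + r*u" using assms ru by linarith
  then have lnpos: "ln (c + u) > 0" "ln (c + r*u) > 0"
    using assms by (auto intro!: ln_gt_zero)
  have key: "ln (c + r*u) powr (\<alpha>*p) \<le> X powr (max \<alpha> 0 * p) * ln (c+u) powr (\<alpha>*p)"
  proof (cases "\<alpha> \<le> 0")
    case True
    have "u \<le> r*u" using assms mult_right_mono[of 1 r u] by simp
    then have "ln (c+u) \<le> ln (c + r*u)" using assms \<open>1 < c + r*u\<close>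
      by (subst ln_le_cancel_iff) auto
    then have "ln (c + r*u) powr (\<alpha>*p) \<le> ln (c+u) powr (\<alpha>*p)"
      using True assms lnpos by (intro powr_mono2') (auto simp: mult_nonpos_nonneg)
    then show ?thesis using True X1 by simp
  next
    case False
    have "ln (c + r*u) powr (\<alpha>*p) \<le> (X * ln (c+u)) powr (\<alpha>*p)"
      using False assms lnpos ln_scale_le[OF assms(2,3,4)] unfolding X_def
      by (intro powr_mono2) auto
    also have "\<dots> = X powr (\<alpha>*p) * ln (c+u) powr (\<alpha>*p)"
      using X1 lnpos by (simp add: powr_mult)
    finally show ?thesis using False by simp
  qed
  have "ff p \<alpha> c (r*u) = r powr (p-1) * u powr (p-1) * ln (c + r*u) powr (\<alpha>*p)"
    unfolding ff_def using assms by (simp add: powr_mult)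
  also have "\<dots> \<le> r powr (p-1) * u powr (p-1) * (X powr (max \<alpha> 0 * p) * ln (c+u) powr (\<alpha>*p))"
    by (intro mult_left_mono key) auto
  also have "\<dots> = r powr (p-1) * X powr (max \<alpha> 0 * p) * ff p \<alpha> c u"
    unfolding ff_def by simp
  finally show ?thesis unfolding X_def .
qed

lemma Phi_scale_upper:
  assumes "p > 1" "c > 1" "r \<ge> 1" "t \<ge> 0"
  shows "PhiLlog p \<alpha> c (r*t) \<le> r powr p * (1 + ln r / ln c) powr (max \<alpha> 0 * p) * PhiLlog p \<alpha> c t"
proof -
  define G where "G = (1 + ln r / ln c) powr (max \<alpha> 0 * p)"
  have "PhiLlog p \<alpha> c (r * t) = r * integral {0..t} (\<lambda>u. ff p \<alpha> c (r * u))"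
    using assms by (intro Phi_scale) auto
  also have "integral {0..t} (\<lambda>u. ff p \<alpha> c (r * u)) \<le> integral {0..t} (\<lambda>u. r powr (p-1) * G * ff p \<alpha> c u)"
  proof (rule integral_le)
    show "(\<lambda>u. ff p \<alpha> c (r * u)) integrable_on {0..t}"
      using assms by (intro integrable_continuous_interval continuous_on_subset[OF ff_cont[OF assms(1,2)]]
          continuous_on_compose2[OF ff_cont[OF assms(1,2)]] continuous_intros) auto
    show "(\<lambda>u. r powr (p-1) * G * ff p \<alpha> c u) integrable_on {0..t}"
      using assms by (intro integrable_continuous_interval continuous_on_mult continuous_on_const continuous_on_subset[OF ff_cont[OF assms(1,2)]]) auto
    show "\<And>x. x \<in> {0..t} \<Longrightarrow> ff p \<alpha> c (r * x) \<le> r powr (p-1) * G * ff p \<alpha> c x"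
      unfolding G_def using assms by (intro ff_scale_upper) auto
  qed
  also have "integral {0..t} (\<lambda>u. r powr (p-1) * G * ff p \<alpha> c u) = r powr (p-1) * G * PhiLlog p \<alpha> c t"
    unfolding Phi_ff by simp
  finally have "PhiLlog p \<alpha> c (r * t) \<le> r * (r powr (p-1) * G * PhiLlog p \<alpha> c t)"
    using assms by (simp add: mult_left_mono)
  also have "\<dots> = r powr p * G * PhiLlog p \<alpha> c t"
    using assms by (simp add: powr_diff field_simps powr_add[symmetric])
  finally show ?thesis unfolding G_def .
qed

lemma log_power:
  fixes a b \<epsilon> x :: real
  assumes "a \<ge> 0" "b > 0" "\<epsilon> > 0" "x \<ge> 1"
  shows "(1 + ln x / b) powr a \<le> (1 + a / (\<epsilon> * b)) powr a * x powr \<epsilon>"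
proof (cases "a = 0")
  case True
  have "1 + ln x / b > 0" using assms by (simp add: add_pos_nonneg)
  moreover have "x powr \<epsilon> \<ge> 1" using assms by (simp add: ge_one_powr_ge_zero)
  ultimately show ?thesis using True by simp
next
  case False
  then have a: "a > 0" using assms by simp
  have y1: "x powr (\<epsilon>/a) \<ge> 1" using assms a by (simp add: ge_one_powr_ge_zero)
  have "ln x = (a/\<epsilon>) * ln (x powr (\<epsilon>/a))" using assms a by (simp add: ln_powr)
  also have "\<dots> \<le> (a/\<epsilon>) * x powr (\<epsilon>/a)"
    using y1 assms a ln_le_minus_one[of "x powr (\<epsilon>/a)"] by (intro mult_left_mono) auto
  finally have "1 + ln x / b \<le> 1 + (a/(\<epsilon>*b)) * x powr (\<epsilon>/a)"
    using assms by (simp add: field_simps divide_right_mono)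
  also have "\<dots> \<le> (1 + a/(\<epsilon>*b)) * x powr (\<epsilon>/a)" using y1 by (simp add: algebra_simps)
  finally have le: "1 + ln x / b \<le> (1 + a/(\<epsilon>*b)) * x powr (\<epsilon>/a)" .
  have "(1 + ln x / b) powr a \<le> ((1 + a/(\<epsilon>*b)) * x powr (\<epsilon>/a)) powr a"
    using le assms a by (intro powr_mono2) auto
  also have "\<dots> = (1 + a/(\<epsilon>*b)) powr a * x powr \<epsilon>"
    using assms a by (simp add: powr_mult powr_powr)
  finally show ?thesis .
qed

lemma Phi_A3:
  assumes hp: "(1 < p \<and> p < 2) \<or> (p = 2 \<and> \<alpha> \<le> 0)" and hc: "c > 1"
  shows "\<exists>K>0. \<forall>r\<ge>1. \<forall>t\<ge>0. PhiLlog p \<alpha> c (r*t) \<le> K * r^2 * PhiLlog p \<alpha> c t"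
proof -
  have p1: "p > 1" using hp by auto
  define K where "K = (if \<alpha> \<le> 0 then 1 else (1 + (\<alpha>*p)/((2-p)*ln c)) powr (\<alpha>*p))"
  have Kpos: "K > 0"
  proof (cases "\<alpha> \<le> 0")
    case False
    then have "p<2" using hp by auto
    then have "0 \<le> \<alpha>*p/((2-p)*ln c)" using False p1 hc
      by (intro divide_nonneg_pos mult_nonneg_nonneg mult_pos_pos) auto
    then have "1 + \<alpha>*p/((2-p)*ln c) > 0" by linarith
    then show ?thesis using False unfolding K_def by simp
  qed (simp add: K_def)
  have G: "(1 + ln r / ln c) powr (max \<alpha> 0 * p) \<le> K * r powr (2-p)" if r: "r \<ge> 1" for r
  proof (cases "\<alpha> \<le> 0")
    case True
    have "1 + ln r / ln c > 0" using r hc by (simp add: add_pos_nonneg)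
    moreover have "r powr (2-p) \<ge> 1" using r hp by (intro ge_one_powr_ge_zero) auto
    ultimately show ?thesis using True unfolding K_def by simp
  next
    case False
    then have "p < 2" using hp by auto
    have "(1 + ln r / ln c) powr (\<alpha>*p) \<le> (1 + (\<alpha>*p)/((2-p)*ln c)) powr (\<alpha>*p) * r powr (2-p)"
      using False \<open>p<2\<close> p1 hc r by (intro log_power) auto
    then show ?thesis using False unfolding K_def by simp
  qed
  have "PhiLlog p \<alpha> c (r*t) \<le> K * r^2 * PhiLlog p \<alpha> c t" if "r \<ge> 1" "t \<ge> 0" for r t
  proof -
    have "PhiLlog p \<alpha> c (r*t) \<le> r powr p * (1 + ln r / ln c) powr (max \<alpha> 0 * p) * PhiLlog p \<alpha> c t"
      using that p1 hc by (intro Phi_scale_upper) auto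
    also have "\<dots> \<le> r powr p * (K * r powr (2-p)) * PhiLlog p \<alpha> c t"
      using G[OF that(1)] Phi_nonneg[OF p1 hc] by (intro mult_right_mono mult_left_mono) auto
    also have "r powr p * (K * r powr (2-p)) = K * r^2"
      using that by (simp add: powr_add[symmetric] algebra_simps)
    finally show ?thesis .
  qed
  then show ?thesis using Kpos by blast
qed

lemma Phi_lower:
  assumes "p > 1" "c > 1" "r > 0"
  shows "(r/2) powr p * min (ln (c+r/2) powr (\<alpha>*p)) (ln (c+r) powr (\<alpha>*p)) \<le> PhiLlog p \<alpha> c r"
proof -
  define m where "m = min (ln (c+r/2) powr (\<alpha>*p)) (ln (c+r) powr (\<alpha>*p))"
  have pt: "(r/2) powr (p-1) * m \<le> ff p \<alpha> c s" if s: "s \<in> {r/2..r}" for s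
  proof -
    have l1: "ln (c + r/2) > 0" using assms by (auto intro!: ln_gt_zero)
    have l2: "ln (c + r/2) \<le> ln (c+s)" "ln (c+s) \<le> ln (c+r)" using s assms by auto
    have "m \<le> ln (c+s) powr (\<alpha>*p)"
    proof (cases "\<alpha>*p \<ge> 0")
      case True
      then have "ln (c+r/2) powr (\<alpha>*p) \<le> ln (c+s) powr (\<alpha>*p)" using l1 l2 by (intro powr_mono2) auto
      then show ?thesis unfolding m_def by simp
    next
      case False
      then have "ln (c+r) powr (\<alpha>*p) \<le> ln (c+s) powr (\<alpha>*p)" using l1 l2 by (intro powr_mono2') auto
      then show ?thesis unfolding m_def by simp
    qed
    moreover have "(r/2) powr (p-1) \<le> s powr (p-1)" using s assms by (intro powr_mono2) auto
    ultimately show ?thesis unfolding ff_def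
      by (intro mult_mono) (auto simp: m_def)
  qed
  have "integral {r/2..r} (\<lambda>s. (r/2) powr (p-1) * m) \<le> integral {r/2..r} (ff p \<alpha> c)"
    using assms pt by (intro integral_le ff_int) auto
  also have "\<dots> \<le> integral {0..r} (ff p \<alpha> c)"
    using assms by (intro integral_subset_le ff_int ff_nonneg ballI) auto
  also have "integral {r/2..r} (\<lambda>s. (r/2) powr (p-1) * m) = (r/2) * ((r/2) powr (p-1) * m)"
    using assms by simp
  also have "(r/2) * ((r/2) powr (p-1) * m) = (r/2) powr p * m"
    using assms by (simp add: powr_diff field_simps)
  finally show ?thesis unfolding m_def Phi_ff .
qed

lemma young_ratio:
  assumes Y: "young_function \<Phi>" and s: "0 < s" "s \<le> t"
  shows "\<Phi> s * t \<le> \<Phi> t * s"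
proof -
  have cv: "convex_on {0..} \<Phi>" and z: "\<Phi> 0 = 0" using Y unfolding young_function_def by auto
  have "\<Phi> ((1 - s/t) *\<^sub>R 0 + (s/t) *\<^sub>R t) \<le> (1 - s/t) * \<Phi> 0 + (s/t) * \<Phi> t"
    using s by (intro convex_onD[OF cv]) auto
  then have "\<Phi> s \<le> (s/t) * \<Phi> t" using s z by simp
  then have "\<Phi> s * t \<le> (s/t) * \<Phi> t * t" using s by (intro mult_right_mono) auto
  then show ?thesis using s by (simp add: field_simps)
qed




lemma L_facts:
  fixes N :: real assumes N: "N \<ge> 1"
  shows "ln (exp 1 + N) \<ge> 1" "ln (exp 1 + N) \<le> 2 * (1 + ln N / 2)" "ln N \<le> ln (exp 1 + N)"
proof -
  have ep: "0 < exp 1 + N" using N exp_gt_zero[of 1] by linarith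
  have "ln (exp 1) \<le> ln (exp 1 + N)" using N ep by (subst ln_le_cancel_iff) auto
  then show "ln (exp 1 + N) \<ge> 1" by simp
  have "exp 1 + N \<le> 2 * exp 1 * N"
  proof -
    have "exp 1 * 1 \<le> exp 1 * N" using N by (intro mult_left_mono) auto
    moreover have "1 * N \<le> exp 1 * N" using N by (intro mult_right_mono) auto
    ultimately show ?thesis by linarith
  qed
  then have "ln (exp 1 + N) \<le> ln (2 * exp 1 * N)" using N ep by (subst ln_le_cancel_iff) auto
  also have "\<dots> = ln 2 + 1 + ln N" using N by (simp add: ln_mult)
  also have "\<dots> \<le> 2 * (1 + ln N / 2)" using ln_2_less_1 by simp
  finally show "ln (exp 1 + N) \<le> 2 * (1 + ln N / 2)" .
  show "ln N \<le> ln (exp 1 + N)" using N ep by (subst ln_le_cancel_iff) auto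
qed

lemma Phi_A4_pos:
  assumes p1: "p > 1" and hc: "c > 1" and a: "\<alpha> > 0"
  shows "\<exists>K>0. \<forall>N::real. N \<ge> 1 \<longrightarrow> N \<le> PhiLlog p \<alpha> c (K * N powr (1/p) * ln (exp 1 + N) powr (-\<alpha>))"
proof -
  define \<beta> where "\<beta> = 1/(2*p)"
  have bpos: "\<beta> > 0" unfolding \<beta>_def using p1 by simp
  define K1 where "K1 = (1 + \<alpha>/(\<beta>*2)) powr \<alpha>"
  define Kc where "Kc = 2 powr \<alpha> * K1"
  define k where "k = min (ln c/4) (\<beta>/2)"
  have kpos: "k > 0" unfolding k_def using hc bpos by simp
  have "\<alpha>/(\<beta>*2) > 0" using a bpos by simp
  then have K1pos: "K1 > 0" unfolding K1_def by simp
  have Kcpos: "Kc > 0" unfolding Kc_def using K1pos by simp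
  define K where "K = max (2*Kc) (2 * k powr (-\<alpha>))"
  have Kpos: "K > 0" unfolding K_def using Kcpos by simp
  have "N \<le> PhiLlog p \<alpha> c (K * N powr (1/p) * ln (exp 1 + N) powr (-\<alpha>))" if N: "N \<ge> 1" for N :: real
  proof -
    define L where "L = ln (exp 1 + N)"
    have L1: "L \<ge> 1" and L2: "L \<le> 2 * (1 + ln N / 2)" using L_facts[OF N] unfolding L_def by auto
    have lnN: "ln N \<ge> 0" using N by simp
    have "L powr \<alpha> \<le> (2 * (1 + ln N / 2)) powr \<alpha>" using L1 L2 a by (intro powr_mono2) auto
    also have "\<dots> = 2 powr \<alpha> * (1 + ln N / 2) powr \<alpha>" by (rule powr_mult)
    also have "(1 + ln N / 2) powr \<alpha> \<le> K1 * N powr \<beta>"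
      unfolding K1_def using a bpos N by (intro log_power) auto
    finally have LK: "L powr \<alpha> \<le> Kc * N powr \<beta>" unfolding Kc_def by (simp add: mult_left_mono)
    define lam where "lam = K * N powr (1/p) * L powr (-\<alpha>)"
    have Lpa: "L powr \<alpha> > 0" using L1 by simp
    have lampos: "lam > 0" unfolding lam_def using Kpos N L1 by simp
    have "lam / 2 = (K/2) * N powr (1/p) / L powr \<alpha>" unfolding lam_def by (simp add: powr_minus_divide)
    also have "\<dots> \<ge> Kc * N powr (1/p) / L powr \<alpha>"
      using Lpa N unfolding K_def by (intro divide_right_mono mult_right_mono) auto
    also have "Kc * N powr (1/p) / L powr \<alpha> \<ge> Kc * N powr (1/p) / (Kc * N powr \<beta>)"
      using LK Lpa Kcpos N by (intro divide_left_mono) auto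
    also have "Kc * N powr (1/p) / (Kc * N powr \<beta>) = N powr (1/p - \<beta>)"
      using Kcpos N by (simp add: powr_diff)
    also have "1/p - \<beta> = \<beta>" unfolding \<beta>_def using p1 by (simp add: field_simps)
    finally have lam2: "N powr \<beta> \<le> lam / 2" .
    have "k * L \<le> k * (2 + ln N)" using L2 kpos by (intro mult_left_mono) auto
    also have "\<dots> \<le> ln (c + N powr \<beta>)"
    proof -
      have "0 \<le> N powr \<beta>" by simp
      have "0 < c + N powr \<beta>" using hc powr_ge_zero[of N \<beta>] by linarith
      have "c \<le> c + N powr \<beta>" using hc powr_ge_zero[of N \<beta>] by linarith
      have "ln c \<le> ln (c + N powr \<beta>)" using hc \<open>c \<le> c + N powr \<beta>\<close> by (intro ln_mono) auto
      moreover have "\<beta> * ln N \<le> ln (c + N powr \<beta>)"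
      proof -
        have "\<beta> * ln N = ln (N powr \<beta>)" using N by (simp add: ln_powr)
        also have "\<dots> \<le> ln (c + N powr \<beta>)" using N hc by (intro ln_mono) auto
        finally show ?thesis .
      qed
      moreover have "k * (2 + ln N) \<le> ln c / 2 + (\<beta>/2) * ln N"
      proof -
        have kk: "k \<le> ln c/4" "k \<le> \<beta>/2" unfolding k_def by auto
        then have "k * ln N \<le> (\<beta>/2) * ln N" using lnN by (intro mult_right_mono)
        then show ?thesis using kk by (simp add: algebra_simps)
      qed
      ultimately show ?thesis by linarith
    qed
    also have "\<dots> \<le> ln (c + lam/2)" using lam2 hc N by (intro ln_mono) (auto intro: add_pos_nonneg)
    finally have kL: "k * L \<le> ln (c + lam/2)" .
    have m: "min (ln (c+lam/2) powr (\<alpha>*p)) (ln (c+lam) powr (\<alpha>*p)) \<ge> (k*L) powr (\<alpha>*p)"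
    proof -
      have "(k*L) powr (\<alpha>*p) \<le> ln (c+lam/2) powr (\<alpha>*p)"
        using kL kpos L1 a p1 by (intro powr_mono2) auto
      moreover have "ln (c+lam/2) powr (\<alpha>*p) \<le> ln (c+lam) powr (\<alpha>*p)"
        using lampos hc a p1 by (intro powr_mono2) (auto intro!: ln_ge_zero)
      ultimately show ?thesis by linarith
    qed
    have "(lam/2) * (k*L) powr \<alpha> = (K/2) * k powr \<alpha> * N powr (1/p) * (L powr (-\<alpha>) * L powr \<alpha>)"
      unfolding lam_def using kpos L1 by (simp add: powr_mult)
    also have "L powr (-\<alpha>) * L powr \<alpha> = 1" using L1 by (simp add: powr_add[symmetric])
    finally have e1: "(lam/2) * (k*L) powr \<alpha> = (K/2) * k powr \<alpha> * N powr (1/p)" by simp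
    have "(K/2) * k powr \<alpha> \<ge> k powr (-\<alpha>) * k powr \<alpha>"
      unfolding K_def using kpos by (intro mult_right_mono) auto
    also have "k powr (-\<alpha>) * k powr \<alpha> = 1" using kpos by (simp add: powr_add[symmetric])
    finally have "(lam/2) * (k*L) powr \<alpha> \<ge> N powr (1/p)"
      unfolding e1 using N by (simp add: mult_le_cancel_right1)
    then have "((lam/2) * (k*L) powr \<alpha>) powr p \<ge> (N powr (1/p)) powr p"
      using p1 N by (intro powr_mono2) auto
    also have "(N powr (1/p)) powr p = N" using p1 N by (simp add: powr_powr)
    also have "((lam/2) * (k*L) powr \<alpha>) powr p = (lam/2) powr p * (k*L) powr (\<alpha>*p)"
    proof -
      have "((lam/2) * (k*L) powr \<alpha>) powr p = (lam/2) powr p * ((k*L) powr \<alpha>) powr p"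
        by (rule powr_mult)
      then show ?thesis by (simp add: powr_powr)
    qed
    also have "\<dots> \<le> (lam/2) powr p * min (ln (c+lam/2) powr (\<alpha>*p)) (ln (c+lam) powr (\<alpha>*p))"
      using m by (intro mult_left_mono) auto
    also have "\<dots> \<le> PhiLlog p \<alpha> c lam" using p1 hc lampos by (intro Phi_lower)
    finally show ?thesis unfolding lam_def L_def .
  qed
  then show ?thesis using Kpos by blast
qed

lemma Phi_A4_nonpos:
  assumes p1: "p > 1" and hc: "c > 1" and a0: "\<alpha> \<le> 0"
  shows "\<exists>K>0. \<forall>N::real. N \<ge> 1 \<longrightarrow> N \<le> PhiLlog p \<alpha> c (K * N powr (1/p) * ln (exp 1 + N) powr (-\<alpha>))"
proof -
  define a where "a = -\<alpha>"
  have a: "a \<ge> 0" unfolding a_def using a0 by simp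
  define K2 where "K2 = (1 + a/((1/2)*1)) powr a"
  have K2pos: "K2 > 0" unfolding K2_def using a by (simp add: add_pos_nonneg)
  define D where "D = 2 * (2+a) powr a * K2"
  have Dpos: "D > 0" unfolding D_def using a K2pos by simp
  define K where "K = max c (D^2)"
  have Kc: "K \<ge> c" and KD: "K \<ge> D^2" unfolding K_def by auto
  have Kpos: "K > 0" using Kc hc by simp
  define B where "B = ln (c+K) + 1 + a"
  have lncK: "ln (c+K) \<ge> 0" using hc Kc by (intro ln_ge_zero) auto
  have B1: "B \<ge> 1" unfolding B_def using lncK a by simp
  have BK: "B powr a \<le> K/2"
  proof -
    have "ln (c+K) \<le> ln (2*K)" using Kc hc by (intro ln_mono) auto
    also have "\<dots> = ln 2 + ln K" using Kpos by (simp add: ln_mult)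
    finally have "B \<le> ln 2 + ln K + 1 + a" unfolding B_def by simp
    also have "\<dots> \<le> (2+a) * (1 + ln K / 1)"
    proof -
      have lnK: "ln K \<ge> 0" using Kc hc by simp
      have "ln K \<le> (2+a) * ln K" using lnK a by (simp add: algebra_simps)
      then show ?thesis using ln_2_less_1 by (simp add: algebra_simps)
    qed
    finally have "B powr a \<le> ((2+a) * (1 + ln K / 1)) powr a" using B1 a by (intro powr_mono2) auto
    also have "\<dots> = (2+a) powr a * (1 + ln K / 1) powr a" by (rule powr_mult)
    also have "(1 + ln K / 1) powr a \<le> K2 * K powr (1/2)"
      unfolding K2_def using a Kc hc by (intro log_power) auto
    finally have "B powr a \<le> (2+a) powr a * K2 * K powr (1/2)" by (simp add: mult_left_mono mult.assoc)
    also have "(2+a) powr a * K2 = D / 2" unfolding D_def by simp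
    also have "D \<le> K powr (1/2)"
    proof -
      have "D = sqrt (D^2)" using Dpos by simp
      also have "\<dots> \<le> sqrt K" using KD real_sqrt_le_mono by blast
      finally show ?thesis using Kpos by (simp add: powr_half_sqrt)
    qed
    then have "D/2 * K powr (1/2) \<le> K powr (1/2) / 2 * K powr (1/2)" by (intro mult_right_mono) auto
    also have "K powr (1/2) / 2 * K powr (1/2) = K / 2" using Kpos by (simp add: powr_add[symmetric])
    finally show ?thesis by simp
  qed
  have "N \<le> PhiLlog p \<alpha> c (K * N powr (1/p) * ln (exp 1 + N) powr (-\<alpha>))" if N: "N \<ge> 1" for N :: real
  proof -
    define L where "L = ln (exp 1 + N)"
    have L1: "L \<ge> 1" and LN: "ln N \<le> L" using L_facts[OF N] unfolding L_def by auto
    have lnL: "ln L \<le> L" using L1 ln_le_minus_one[of L] by simp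
    define lam where "lam = K * N powr (1/p) * L powr a"
    have lampos: "lam > 0" unfolding lam_def using Kpos N L1 by simp
    have La1: "L powr a \<ge> 1" using L1 a by (simp add: ge_one_powr_ge_zero)
    have "c + lam \<le> (c+K) * N * L powr a"
    proof -
      have "N powr (1/p) \<le> N powr 1" using N p1 by (intro powr_mono) auto
      then have "N powr (1/p) \<le> N" using N by simp
      then have "lam \<le> K * N * L powr a" unfolding lam_def using Kpos La1 by (intro mult_right_mono mult_left_mono) auto
      moreover have "c \<le> c * (N * L powr a)"
      proof -
        have "1 \<le> N * L powr a" using N La1 by (metis mult_mono' mult_1 zero_le_one)
        then show ?thesis using hc by (simp add: mult_le_cancel_left1)
      qed
      ultimately show ?thesis by (simp add: algebra_simps)
    qed
    then have "ln (c + lam) \<le> ln ((c+K) * N * L powr a)" using lampos hc by (intro ln_mono) auto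
    also have "\<dots> = ln (c+K) + ln N + a * ln L" using hc Kpos N L1 by (simp add: ln_mult ln_powr)
    also have "\<dots> \<le> ln (c+K) * L + L + a * L"
      using lncK L1 LN lnL a by (intro add_mono mult_left_mono) (auto simp: mult_le_cancel_left1)
    also have "\<dots> = B * L" unfolding B_def by (simp add: algebra_simps)
    finally have lnB: "ln (c + lam) \<le> B * L" .
    have lpos: "ln (c + lam) > 0" using hc lampos by (intro ln_gt_zero) auto
    have m: "min (ln (c+lam/2) powr (\<alpha>*p)) (ln (c+lam) powr (\<alpha>*p)) \<ge> (B*L) powr (\<alpha>*p)"
    proof -
      have "(B*L) powr (\<alpha>*p) \<le> ln (c+lam) powr (\<alpha>*p)"
        using lnB lpos a0 p1 by (intro powr_mono2') (auto simp: mult_nonpos_nonneg)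
      moreover have "ln (c+lam) powr (\<alpha>*p) \<le> ln (c+lam/2) powr (\<alpha>*p)"
        using lampos hc a0 p1 by (intro powr_mono2') (auto intro!: ln_gt_zero simp: mult_nonpos_nonneg)
      ultimately show ?thesis by simp
    qed
    have "(lam/2) * (B*L) powr \<alpha> = (K/2) * B powr \<alpha> * N powr (1/p) * (L powr a * L powr \<alpha>)"
      unfolding lam_def using B1 L1 by (simp add: powr_mult)
    also have "L powr a * L powr \<alpha> = 1" using L1 unfolding a_def by (simp add: powr_add[symmetric])
    finally have e1: "(lam/2) * (B*L) powr \<alpha> = (K/2) * B powr \<alpha> * N powr (1/p)" by simp
    have "(K/2) * B powr \<alpha> \<ge> B powr a * B powr \<alpha>"
      using BK B1 by (intro mult_right_mono) auto
    also have "B powr a * B powr \<alpha> = 1" using B1 unfolding a_def by (simp add: powr_add[symmetric])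
    finally have "(lam/2) * (B*L) powr \<alpha> \<ge> N powr (1/p)"
      unfolding e1 using N by (simp add: mult_le_cancel_right1)
    then have "((lam/2) * (B*L) powr \<alpha>) powr p \<ge> (N powr (1/p)) powr p"
      using p1 N by (intro powr_mono2) auto
    also have "(N powr (1/p)) powr p = N" using p1 N by (simp add: powr_powr)
    also have "((lam/2) * (B*L) powr \<alpha>) powr p = (lam/2) powr p * (B*L) powr (\<alpha>*p)"
    proof -
      have "((lam/2) * (B*L) powr \<alpha>) powr p = (lam/2) powr p * ((B*L) powr \<alpha>) powr p"
        by (rule powr_mult)
      then show ?thesis by (simp add: powr_powr)
    qed
    also have "\<dots> \<le> (lam/2) powr p * min (ln (c+lam/2) powr (\<alpha>*p)) (ln (c+lam) powr (\<alpha>*p))"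
      using m by (intro mult_left_mono) auto
    also have "\<dots> \<le> PhiLlog p \<alpha> c lam" using p1 hc lampos by (intro Phi_lower)
    finally show ?thesis unfolding lam_def L_def a_def by simp
  qed
  then show ?thesis using Kpos by blast
qed

lemma Phi_A4:
  assumes hp: "(1 < p \<and> p < 2) \<or> (p = 2 \<and> \<alpha> \<le> 0)" and hc: "c > 1"
  shows "\<exists>K>0. \<forall>N::real. N \<ge> 1 \<longrightarrow> N \<le> PhiLlog p \<alpha> c (K * N powr (1/p) * ln (exp 1 + N) powr (-\<alpha>))"
  using hp hc Phi_A4_pos[of p c \<alpha>] Phi_A4_nonpos[of p c \<alpha>] by (cases "\<alpha> > 0") auto




abbreviation TM where "TM \<equiv> restrict_space lborel torus"

definition ee :: "int \<Rightarrow> real \<Rightarrow> complex" where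
  "ee n x = exp (\<i> * of_int n * of_real x)"

lemma torus_sets[simp]: "torus \<in> sets lborel" unfolding torus_def by simp

lemma space_TM[simp]: "space TM = torus" by (simp add: space_restrict_space)

lemma emeasure_TM: "emeasure TM torus = ennreal (2*pi)"
  by (simp add: emeasure_restrict_space torus_def)

lemma fin_TM: "finite_measure TM"
  by (rule finite_measureI) (simp add: emeasure_TM)

lemma int_TM:
  fixes f :: "real \<Rightarrow> 'b::{banach, second_countable_topology}"
  shows "set_lebesgue_integral lborel torus f = integral\<^sup>L TM f"
  unfolding set_lebesgue_integral_def by (rule integral_restrict_space[symmetric]) (simp add: torus_def)

lemma nn_TM: "orlicz_modular \<Phi> g = (\<integral>\<^sup>+x. ennreal (\<Phi> (norm (g x))) \<partial>TM)"
  unfolding orlicz_modular_def by (rule nn_integral_restrict_space[symmetric]) (simp add: torus_def)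

lemma meas_TM: "f \<in> borel_measurable lborel \<Longrightarrow> f \<in> borel_measurable TM"
  by (rule measurable_restrict_space1)

lemma ee_meas[measurable]: "ee n \<in> borel_measurable TM"
  unfolding ee_def by (intro meas_TM) measurable

lemma cnj_meas[measurable]: "f \<in> borel_measurable M \<Longrightarrow> (\<lambda>x. cnj (f x :: complex)) \<in> borel_measurable M"
  by (rule borel_measurable_continuous_on[where f=cnj]) (auto intro: continuous_on_cnj continuous_on_id)

lemma norm_ee[simp]: "norm (ee n x) = 1"
  unfolding ee_def by (simp add: norm_exp_eq_Re)

lemma ee_cnj: "cnj (ee n x) = exp (- (\<i> * of_int n * of_real x))"
  unfolding ee_def by (simp add: exp_cnj)

lemma ee_cnj': "cnj (ee n x) = ee (-n) x"
  unfolding ee_cnj unfolding ee_def by simp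

lemma ee_mult_cnj: "ee n x * cnj (ee m x) = ee (n - m) x"
  unfolding ee_cnj unfolding ee_def by (simp add: exp_add[symmetric] algebra_simps)

lemma fc_TM: "fourier_coeff g n = complex_of_real (1/(2*pi)) * integral\<^sup>L TM (\<lambda>x. g x * cnj (ee n x))"
  unfolding fourier_coeff_def int_TM ee_cnj by simp

lemma ps_ee: "partial_sum A g x = (\<Sum>n\<in>A. fourier_coeff g n * ee n x)"
  unfolding partial_sum_def ee_def by simp

lemma bounded_int:
  fixes f :: "real \<Rightarrow> 'b::{banach, second_countable_topology}"
  assumes "f \<in> borel_measurable TM" "\<And>x. x \<in> torus \<Longrightarrow> norm (f x) \<le> B"
  shows "integrable TM f"
  by (rule finite_measure.integrable_const_bound[OF fin_TM, of f B]) (use assms in \<open>auto simp: AE_restrict_space_iff\<close>)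

lemma ee_integral: "integral\<^sup>L TM (ee k) = (if k = 0 then 2*pi else 0)"
proof (cases "k = 0")
  case True
  then have "integral\<^sup>L TM (ee k) = integral\<^sup>L TM (\<lambda>x. 1::complex)" unfolding ee_def by simp
  also have "\<dots> = 2*pi" using emeasure_TM by (simp add: measure_def scaleR_conv_of_real)
  finally show ?thesis using True by simp
next
  case False
  define F where "F z = exp (\<i> * of_int k * z) / (\<i> * of_int k)" for z :: complex
  have der: "(F has_field_derivative exp (\<i> * of_int k * z)) (at z)" for z
    unfolding F_def using False by (auto intro!: derivative_eq_intros)
  have "integral\<^sup>L TM (ee k) = set_lebesgue_integral lborel {-pi..<pi} (ee k)"
    using int_TM[of "ee k"] by (simp add: torus_def)
  also have "\<dots> = set_lebesgue_integral lborel {-pi..pi} (ee k)"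
    by (rule set_integral_discrete_difference[where X="{pi}"]) auto
  also have "\<dots> = (LBINT x=-pi..pi. ee k x)"
    by (simp add: interval_integral_Icc)
  also have "\<dots> = F (of_real pi) - F (of_real (-pi))"
    by (rule interval_integral_FTC_finite[where F="\<lambda>x. F (of_real x)"])
       (auto simp: ee_def intro!: continuous_intros has_vector_derivative_real_field der)
  also have "\<dots> = 0"
  proof -
    have "exp (\<i> * of_int k * of_real pi) = cis (k * pi)"
      by (simp add: cis_conv_exp mult.commute mult.left_commute)
    moreover have "exp (\<i> * of_int k * of_real (-pi)) = cis (-(k * pi))"
      by (simp add: cis_conv_exp mult.commute mult.left_commute)
    moreover have "cis (k * pi) = cis (-(k*pi))"
      by (simp add: complex_eq_iff cos_minus mult.commute)
    ultimately show ?thesis unfolding F_def by simp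
  qed
  finally show ?thesis using False by simp
qed

lemma ee_cint: "integrable TM (\<lambda>x. c * ee k x)"
  by (rule bounded_int[where B="norm c"]) (auto simp: norm_mult)

lemma orth:
  assumes A: "finite A"
  shows "integral\<^sup>L TM (\<lambda>x. (norm (\<Sum>n\<in>A. a n * ee n x))^2) = 2*pi * (\<Sum>n\<in>A. (norm (a n))^2)"
proof -
  define S where "S x = (\<Sum>n\<in>A. \<Sum>m\<in>A. a n * cnj (a m) * ee (n-m) x)" for x
  have pt: "(norm (\<Sum>n\<in>A. a n * ee n x))^2 = Re (S x)" for x
  proof -
    have "complex_of_real ((norm (\<Sum>n\<in>A. a n * ee n x))^2) = (\<Sum>n\<in>A. a n * ee n x) * cnj (\<Sum>n\<in>A. a n * ee n x)"
      by (rule complex_norm_square)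
    also have "\<dots> = S x"
      unfolding S_def cnj_sum sum_product
      by (intro sum.cong refl) (simp add: ee_mult_cnj[symmetric] algebra_simps)
    finally show ?thesis by (metis Re_complex_of_real)
  qed
  have intS: "integrable TM S" unfolding S_def
    by (auto intro!: ee_cint)
  have "integral\<^sup>L TM S = (\<Sum>n\<in>A. \<Sum>m\<in>A. a n * cnj (a m) * integral\<^sup>L TM (ee (n-m)))"
    unfolding S_def
    by (simp add: integral_sum ee_cint integrable_sum)
  also have "\<dots> = (\<Sum>n\<in>A. a n * cnj (a n) * (2*pi))"
  proof (rule sum.cong[OF refl])
    fix n assume n: "n \<in> A"
    have "(\<Sum>m\<in>A. a n * cnj (a m) * integral\<^sup>L TM (ee (n-m))) = (\<Sum>m\<in>A. if m = n then a n * cnj (a m) * (2*pi) else 0)"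
      by (intro sum.cong refl) (simp add: ee_integral)
    also have "\<dots> = a n * cnj (a n) * (2*pi)" using A n by simp
    finally show "(\<Sum>m\<in>A. a n * cnj (a m) * integral\<^sup>L TM (ee (n-m))) = a n * cnj (a n) * (2*pi)" .
  qed
  finally have IS: "integral\<^sup>L TM S = (\<Sum>n\<in>A. a n * cnj (a n) * (2*pi))" .
  have "integral\<^sup>L TM (\<lambda>x. (norm (\<Sum>n\<in>A. a n * ee n x))^2) = integral\<^sup>L TM (\<lambda>x. Re (S x))"
    using pt by simp
  also have "\<dots> = Re (integral\<^sup>L TM S)" using intS by simp
  also have "\<dots> = (\<Sum>n\<in>A. Re (a n * cnj (a n) * (2*pi)))" unfolding IS by simp
  also have "\<dots> = (\<Sum>n\<in>A. 2*pi * (norm (a n))^2)"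
    by (intro sum.cong refl) (simp add: complex_norm_square[symmetric])
  finally show ?thesis by (simp add: sum_distrib_left)
qed

lemma norm_diff_sq: "(norm (u - v))^2 = (norm u)^2 - 2 * Re (u * cnj v) + (norm (v::complex))^2"
  by (simp only: cmod_power2) (simp add: power2_eq_square algebra_simps)

lemma bessel:
  assumes A: "finite A" and f: "f \<in> borel_measurable TM" and B: "\<And>x. x \<in> torus \<Longrightarrow> norm (f x) \<le> B"
  shows "2*pi * (\<Sum>n\<in>A. (norm (fourier_coeff f n))^2) \<le> integral\<^sup>L TM (\<lambda>x. (norm (f x))^2)"
proof -
  define a where "a n = fourier_coeff f n" for n
  define P where "P x = (\<Sum>n\<in>A. a n * ee n x)" for x
  define Q where "Q = (\<Sum>n\<in>A. (norm (a n))^2)"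
  have Pm[measurable]: "P \<in> borel_measurable TM" unfolding P_def by measurable
  have PB: "norm (P x) \<le> (\<Sum>n\<in>A. norm (a n))" for x
    unfolding P_def by (rule order_trans[OF norm_sum]) (simp add: norm_mult)
  have intf: "integrable TM f" using bounded_int[OF f B] .
  note f[measurable]
  have intfe: "integrable TM (\<lambda>x. f x * cnj (ee n x))" for n
    by (rule bounded_int[where B=B]) (use f B in \<open>auto simp: norm_mult ee_cnj'\<close>)
  have In: "integral\<^sup>L TM (\<lambda>x. f x * cnj (ee n x)) = (2*pi) * a n" for n
    unfolding a_def fc_TM by simp
  have "integral\<^sup>L TM (\<lambda>x. f x * cnj (P x)) = integral\<^sup>L TM (\<lambda>x. \<Sum>n\<in>A. cnj (a n) * (f x * cnj (ee n x)))"
    unfolding P_def cnj_sum by (simp add: sum_distrib_left algebra_simps)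
  also have "\<dots> = (\<Sum>n\<in>A. cnj (a n) * ((2*pi) * a n))"
    by (simp add: integral_sum intfe In)
  also have "\<dots> = (\<Sum>n\<in>A. complex_of_real (2*pi * (norm (a n))^2))"
  proof (intro sum.cong refl)
    fix n
    have "complex_of_real (2*pi * (norm (a n))^2) = complex_of_real (2*pi) * (a n * cnj (a n))"
      by (simp only: of_real_mult complex_norm_square)
    then show "cnj (a n) * ((2*pi) * a n) = complex_of_real (2*pi * (norm (a n))^2)"
      by (simp add: algebra_simps)
  qed
  also have "\<dots> = complex_of_real (2*pi * Q)"
    unfolding Q_def by (simp only: of_real_sum sum_distrib_left)
  finally have I1: "integral\<^sup>L TM (\<lambda>x. f x * cnj (P x)) = complex_of_real (2*pi * Q)" .
  have I2: "integral\<^sup>L TM (\<lambda>x. (norm (P x))^2) = 2*pi * Q"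
    unfolding P_def Q_def by (rule orth[OF A])
  have i1: "integrable TM (\<lambda>x. (norm (f x))^2)"
    by (rule bounded_int[where B="B^2"]) (use f B in \<open>auto intro: power_mono\<close>)
  have i3: "integrable TM (\<lambda>x. (norm (P x))^2)"
    by (rule bounded_int[where B="(\<Sum>n\<in>A. norm (a n))^2"]) (use PB in \<open>auto intro: power_mono\<close>)
  have i3': "integrable TM (\<lambda>x. f x * cnj (P x))"
    by (rule bounded_int[where B="B * (\<Sum>n\<in>A. norm (a n))"]) (measurable, simp add: norm_mult, rule mult_mono, use B PB in \<open>auto intro: order_trans[OF norm_ge_zero B]\<close>)
  have i2: "integrable TM (\<lambda>x. Re (f x * cnj (P x)))"
    by (rule integrable_Re[OF i3'])
  have "0 \<le> integral\<^sup>L TM (\<lambda>x. (norm (f x - P x))^2)" by simp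
  also have "\<dots> = integral\<^sup>L TM (\<lambda>x. (norm (f x))^2 - 2 * Re (f x * cnj (P x)) + (norm (P x))^2)"
    by (simp add: norm_diff_sq)
  also have "\<dots> = integral\<^sup>L TM (\<lambda>x. (norm (f x))^2) - 2 * Re (integral\<^sup>L TM (\<lambda>x. f x * cnj (P x))) + 2*pi*Q"
  proof -
    define R where "R x = Re (f x * cnj (P x))" for x
    have iR: "integrable TM R" unfolding R_def by (rule i2)
    have "integral\<^sup>L TM (\<lambda>x. (norm (f x))^2 - 2 * R x + (norm (P x))^2)
        = integral\<^sup>L TM (\<lambda>x. (norm (f x))^2 - 2 * R x) + integral\<^sup>L TM (\<lambda>x. (norm (P x))^2)"
      by (rule Bochner_Integration.integral_add) (use i1 iR i3 in auto)
    also have "integral\<^sup>L TM (\<lambda>x. (norm (f x))^2 - 2 * R x) = integral\<^sup>L TM (\<lambda>x. (norm (f x))^2) - integral\<^sup>L TM (\<lambda>x. 2 * R x)"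
      by (rule Bochner_Integration.integral_diff) (use i1 iR in auto)
    also have "integral\<^sup>L TM (\<lambda>x. 2 * R x) = 2 * integral\<^sup>L TM R" by simp
    also have "integral\<^sup>L TM R = Re (integral\<^sup>L TM (\<lambda>x. f x * cnj (P x)))"
      unfolding R_def by (rule integral_Re[OF i3'])
    finally show ?thesis unfolding R_def I2 .
  qed
  also have "\<dots> = integral\<^sup>L TM (\<lambda>x. (norm (f x))^2) - 2*pi*Q" unfolding I1 by simp
  finally show ?thesis unfolding Q_def a_def by simp
qed




lemma yf_props:
  assumes Y: "young_function \<Phi>"
  shows "\<Phi> 0 = 0" "\<And>s t. 0 \<le> s \<Longrightarrow> s \<le> t \<Longrightarrow> \<Phi> s \<le> \<Phi> t" "\<And>t. 0 \<le> t \<Longrightarrow> 0 \<le> \<Phi> t"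
    "continuous_on {0..} \<Phi>"
proof -
  show z: "\<Phi> 0 = 0" using Y unfolding young_function_def by auto
  have m: "mono_on {0..} \<Phi>" using Y unfolding young_function_def by auto
  show mo: "\<And>s t. 0 \<le> s \<Longrightarrow> s \<le> t \<Longrightarrow> \<Phi> s \<le> \<Phi> t" using m by (auto simp: mono_on_def)
  show "\<And>t. 0 \<le> t \<Longrightarrow> 0 \<le> \<Phi> t" using mo[of 0] z by fastforce
  show "continuous_on {0..} \<Phi>" using Y unfolding young_function_def by auto
qed

lemma yf_meas[measurable]:
  assumes Y: "young_function \<Phi>" and F: "F \<in> borel_measurable M"
  shows "(\<lambda>x. \<Phi> (norm (F x :: complex))) \<in> borel_measurable M"
proof -
  have c: "continuous_on UNIV (\<lambda>t. \<Phi> (max 0 t))"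
    by (rule continuous_on_compose2[OF yf_props(4)[OF Y]]) (auto intro!: continuous_intros)
  have "(\<lambda>x. \<Phi> (max 0 (norm (F x)))) \<in> borel_measurable M"
    by (rule borel_measurable_continuous_on[OF c]) (use F in measurable)
  then show ?thesis by simp
qed

lemma enn_mult_le: "0 \<le> a \<Longrightarrow> 0 \<le> b \<Longrightarrow> x \<le> a * b \<Longrightarrow> ennreal x \<le> ennreal a * ennreal b"
  by (simp add: ennreal_mult[symmetric] ennreal_leI)

lemma core_L2:
  fixes \<Phi> :: "real \<Rightarrow> real" and h :: "real \<Rightarrow> complex" and lam N K3 :: real
  assumes Y: "young_function \<Phi>"
    and K3: "\<And>r t. r \<ge> 1 \<Longrightarrow> t \<ge> 0 \<Longrightarrow> \<Phi> (r*t) \<le> K3 * r^2 * \<Phi> t" and K3pos: "K3 > 0"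
    and hm[measurable]: "h \<in> borel_measurable TM"
    and hP: "(\<integral>\<^sup>+x. ennreal (\<Phi> (norm (h x))) \<partial>TM) \<le> 1"
    and lam: "lam > 0" and N: "N \<ge> 1" and PhiN: "\<Phi> lam \<ge> N"
    and A: "finite A" "real (card A) \<le> N"
  shows "integral\<^sup>L TM (\<lambda>x. (norm (partial_sum A h x))^2) \<le> (1/pi + 2*K3) * lam^2 / N"
proof -
  note Pz = yf_props(1)[OF Y] and Pmono = yf_props(2)[OF Y] and Pnn = yf_props(3)[OF Y]
  have Plam: "\<Phi> lam > 0" using PhiN N by linarith
  define h1 where "h1 x = (if norm (h x) > lam then h x else 0)" for x
  define h2 where "h2 x = (if norm (h x) > lam then 0 else h x)" for x
  have h1m[measurable]: "h1 \<in> borel_measurable TM" unfolding h1_def by measurable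
  have h2m[measurable]: "h2 \<in> borel_measurable TM" unfolding h2_def by measurable
  have hsum: "h x = h1 x + h2 x" for x unfolding h1_def h2_def by simp
  have Pm[measurable]: "(\<lambda>x. \<Phi> (norm (h x))) \<in> borel_measurable TM" using yf_meas[OF Y hm] .
  have pt1: "norm (h1 x) \<le> (lam / \<Phi> lam) * \<Phi> (norm (h x))" for x
  proof (cases "norm (h x) > lam")
    case True
    have "\<Phi> lam * norm (h x) \<le> \<Phi> (norm (h x)) * lam"
      using True lam by (intro young_ratio[OF Y]) auto
    then show ?thesis using True Plam unfolding h1_def by (simp add: field_simps)
  next
    case False
    then show ?thesis unfolding h1_def using lam Plam Pnn[of "norm (h x)"] by simp
  qed
  have pt2: "(norm (h2 x))^2 \<le> (K3 * lam^2 / \<Phi> lam) * \<Phi> (norm (h x))" for x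
  proof (cases "norm (h x) > lam \<or> h x = 0")
    case True
    then show ?thesis unfolding h2_def using lam Plam K3pos Pnn[of "norm (h x)"] by auto
  next
    case False
    define t where "t = norm (h x)"
    have t: "t > 0" "t \<le> lam" using False unfolding t_def by auto
    have "\<Phi> lam = \<Phi> ((lam/t) * t)" using t by simp
    also have "\<dots> \<le> K3 * (lam/t)^2 * \<Phi> t" using t by (intro K3) auto
    finally have "\<Phi> lam * t^2 \<le> K3 * lam^2 * \<Phi> t" using t by (simp add: field_simps power2_eq_square)
    then have "t^2 \<le> (K3 * lam^2 / \<Phi> lam) * \<Phi> t" using Plam by (simp add: field_simps)
    then show ?thesis using False unfolding h2_def t_def by simp
  qed
  have nn1: "(\<integral>\<^sup>+x. ennreal (norm (h1 x)) \<partial>TM) \<le> ennreal (lam / \<Phi> lam)"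
  proof -
    have "(\<integral>\<^sup>+x. ennreal (norm (h1 x)) \<partial>TM) \<le> (\<integral>\<^sup>+x. ennreal (lam / \<Phi> lam) * ennreal (\<Phi> (norm (h x))) \<partial>TM)"
      using pt1 lam Plam Pnn by (intro nn_integral_mono enn_mult_le) auto
    also have "\<dots> = ennreal (lam / \<Phi> lam) * (\<integral>\<^sup>+x. ennreal (\<Phi> (norm (h x))) \<partial>TM)"
      by (rule nn_integral_cmult) measurable
    also have "\<dots> \<le> ennreal (lam / \<Phi> lam) * 1" using hP by (intro mult_left_mono) auto
    finally show ?thesis by simp
  qed
  have int1: "integrable TM h1"
    by (rule integrableI_bounded) (use nn1 in \<open>auto simp: top_unique order_le_less_trans\<close>)
  have I1: "integral\<^sup>L TM (\<lambda>x. norm (h1 x)) \<le> lam / \<Phi> lam"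
  proof -
    have "ennreal (integral\<^sup>L TM (\<lambda>x. norm (h1 x))) = (\<integral>\<^sup>+x. ennreal (norm (h1 x)) \<partial>TM)"
      by (rule nn_integral_eq_integral[symmetric]) (use int1 in auto)
    with nn1 have "ennreal (integral\<^sup>L TM (\<lambda>x. norm (h1 x))) \<le> ennreal (lam / \<Phi> lam)" by simp
    then show ?thesis using lam Plam by (subst (asm) ennreal_le_iff) auto
  qed
  have h2b: "norm (h2 x) \<le> lam" for x unfolding h2_def using lam by auto
  have int2: "integrable TM (\<lambda>x. (norm (h2 x))^2)"
    by (rule bounded_int[where B="lam^2"]) (use h2b lam in \<open>auto intro: power_mono\<close>)
  have I2: "integral\<^sup>L TM (\<lambda>x. (norm (h2 x))^2) \<le> K3 * lam^2 / \<Phi> lam"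
  proof -
    have "(\<integral>\<^sup>+x. ennreal ((norm (h2 x))^2) \<partial>TM) \<le> (\<integral>\<^sup>+x. ennreal (K3 * lam^2 / \<Phi> lam) * ennreal (\<Phi> (norm (h x))) \<partial>TM)"
      using pt2 lam Plam K3pos Pnn by (intro nn_integral_mono enn_mult_le) auto
    also have "\<dots> = ennreal (K3 * lam^2 / \<Phi> lam) * (\<integral>\<^sup>+x. ennreal (\<Phi> (norm (h x))) \<partial>TM)"
      by (rule nn_integral_cmult) measurable
    also have "\<dots> \<le> ennreal (K3 * lam^2 / \<Phi> lam) * 1" using hP by (intro mult_left_mono) auto
    finally have "(\<integral>\<^sup>+x. ennreal ((norm (h2 x))^2) \<partial>TM) \<le> ennreal (K3 * lam^2 / \<Phi> lam)" by simp
    moreover have "(\<integral>\<^sup>+x. ennreal ((norm (h2 x))^2) \<partial>TM) = ennreal (integral\<^sup>L TM (\<lambda>x. (norm (h2 x))^2))"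
      by (rule nn_integral_eq_integral) (use int2 in auto)
    ultimately have "ennreal (integral\<^sup>L TM (\<lambda>x. (norm (h2 x))^2)) \<le> ennreal (K3 * lam^2 / \<Phi> lam)" by simp
    then show ?thesis using lam Plam K3pos by (subst (asm) ennreal_le_iff) auto
  qed
  have int1e: "integrable TM (\<lambda>x. h1 x * cnj (ee n x))" for n
    by (rule Bochner_Integration.integrable_bound[OF int1]) (auto simp: norm_mult)
  have int2e: "integrable TM (\<lambda>x. h2 x * cnj (ee n x))" for n
    by (rule bounded_int[where B=lam]) (use h2b in \<open>auto simp: norm_mult\<close>)
  have fsplit: "fourier_coeff h n = fourier_coeff h1 n + fourier_coeff h2 n" for n
  proof -
    have "integral\<^sup>L TM (\<lambda>x. h x * cnj (ee n x)) = integral\<^sup>L TM (\<lambda>x. h1 x * cnj (ee n x) + h2 x * cnj (ee n x))"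
      by (simp add: hsum[of _] distrib_right cong: Bochner_Integration.integral_cong)
    also have "\<dots> = integral\<^sup>L TM (\<lambda>x. h1 x * cnj (ee n x)) + integral\<^sup>L TM (\<lambda>x. h2 x * cnj (ee n x))"
      by (rule Bochner_Integration.integral_add[OF int1e int2e])
    finally show ?thesis unfolding fc_TM by (simp add: distrib_left)
  qed
  have f1b: "norm (fourier_coeff h1 n) \<le> lam / (2*pi*\<Phi> lam)" for n
  proof -
    have "norm (fourier_coeff h1 n) = (1/(2*pi)) * norm (integral\<^sup>L TM (\<lambda>x. h1 x * cnj (ee n x)))"
      unfolding fc_TM norm_mult norm_of_real by simp
    also have "norm (integral\<^sup>L TM (\<lambda>x. h1 x * cnj (ee n x))) \<le> integral\<^sup>L TM (\<lambda>x. norm (h1 x * cnj (ee n x)))"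
      by (rule integral_norm_bound)
    also have "\<dots> = integral\<^sup>L TM (\<lambda>x. norm (h1 x))" by (simp add: norm_mult)
    also have "\<dots> \<le> lam / \<Phi> lam" by (rule I1)
    finally show ?thesis by (simp add: field_simps)
  qed
  have S1: "(\<Sum>n\<in>A. (norm (fourier_coeff h1 n))^2) \<le> N * (lam / (2*pi*\<Phi> lam))^2"
  proof -
    have "(\<Sum>n\<in>A. (norm (fourier_coeff h1 n))^2) \<le> (\<Sum>n\<in>A. (lam / (2*pi*\<Phi> lam))^2)"
      by (intro sum_mono power_mono f1b) auto
    also have "\<dots> = real (card A) * (lam / (2*pi*\<Phi> lam))^2" by simp
    also have "\<dots> \<le> N * (lam / (2*pi*\<Phi> lam))^2" using A by (intro mult_right_mono) auto
    finally show ?thesis .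
  qed
  have S2: "2*pi * (\<Sum>n\<in>A. (norm (fourier_coeff h2 n))^2) \<le> K3 * lam^2 / \<Phi> lam"
    using bessel[OF A(1) h2m, of lam] h2b I2 by (meson order_trans)
  have "integral\<^sup>L TM (\<lambda>x. (norm (partial_sum A h x))^2) = 2*pi * (\<Sum>n\<in>A. (norm (fourier_coeff h n))^2)"
    unfolding ps_ee by (rule orth[OF A(1)])
  also have "\<dots> \<le> 2*pi * (\<Sum>n\<in>A. 2 * (norm (fourier_coeff h1 n))^2 + 2 * (norm (fourier_coeff h2 n))^2)"
  proof -
    have "(norm (a + b))^2 \<le> 2 * (norm a)^2 + 2 * (norm b)^2" for a b :: complex
    proof -
      have "(norm (a+b))^2 \<le> (norm a + norm b)^2" by (intro power_mono norm_triangle_ineq) auto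
      also have "\<dots> \<le> 2 * (norm a)^2 + 2 * (norm b)^2"
      proof -
        have "0 \<le> (norm a - norm b)^2" by simp
        then show ?thesis unfolding power2_sum power2_diff by linarith
      qed
      finally show ?thesis .
    qed
    then show ?thesis unfolding fsplit by (intro mult_left_mono sum_mono) auto
  qed
  also have "\<dots> = 4*pi * (\<Sum>n\<in>A. (norm (fourier_coeff h1 n))^2) + 2 * (2*pi * (\<Sum>n\<in>A. (norm (fourier_coeff h2 n))^2))"
    by (simp add: sum.distrib sum_distrib_left algebra_simps)
  also have "\<dots> \<le> 4*pi * (N * (lam / (2*pi*\<Phi> lam))^2) + 2 * (K3 * lam^2 / \<Phi> lam)"
    using S1 S2 by (intro add_mono mult_left_mono) auto
  also have "\<dots> \<le> (1/pi + 2*K3) * lam^2 / N"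
  proof -
    have "4*pi * (N * (lam / (2*pi*\<Phi> lam))^2) = (1/pi) * lam^2 * (N / (\<Phi> lam)^2)"
      by (simp add: power2_eq_square field_simps)
    also have "N / (\<Phi> lam)^2 \<le> 1 / N"
    proof -
      have "N * N \<le> \<Phi> lam * \<Phi> lam" using PhiN N by (intro mult_mono) auto
      then show ?thesis using N Plam by (simp add: field_simps power2_eq_square)
    qed
    then have "(1/pi) * lam^2 * (N / (\<Phi> lam)^2) \<le> (1/pi) * lam^2 * (1/N)"
      by (intro mult_left_mono) auto
    finally have a1: "4*pi * (N * (lam / (2*pi*\<Phi> lam))^2) \<le> (1/pi) * lam^2 / N" by simp
    have a2: "K3 * lam^2 / \<Phi> lam \<le> K3 * lam^2 / N"
      using PhiN N K3pos by (intro divide_left_mono) auto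
    have e: "(1/pi + 2*K3) * lam^2 / N = (1/pi)*lam^2/N + 2*(K3*lam^2/N)" using N by (simp add: field_simps)
    show ?thesis unfolding e using a1 a2 by linarith
  qed
  finally show ?thesis .
qed




lemma measure_TM: "measure TM torus = 2*pi"
  using emeasure_TM by (simp add: measure_def)

lemma conv_mod:
  fixes \<Phi> :: "real \<Rightarrow> real" and F :: "real \<Rightarrow> complex"
  assumes Y: "young_function \<Phi>"
    and K3: "\<And>r t. r \<ge> 1 \<Longrightarrow> t \<ge> 0 \<Longrightarrow> \<Phi> (r*t) \<le> K3 * r^2 * \<Phi> t" and K3pos: "K3 > 0"
    and d: "d > 0" and Pd: "2*pi*\<Phi> d \<le> 1/2"
    and Fm[measurable]: "F \<in> borel_measurable TM" and Fb: "\<And>x. norm (F x) \<le> B"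
    and FV: "integral\<^sup>L TM (\<lambda>x. (norm (F x))^2) \<le> V"
    and s: "s > 0" and KV: "(K3 * \<Phi> d / d^2) * V / s^2 \<le> 1/2"
  shows "orlicz_modular \<Phi> (\<lambda>x. F x / of_real s) \<le> 1"
proof -
  note Pz = yf_props(1)[OF Y] and Pmono = yf_props(2)[OF Y] and Pnn = yf_props(3)[OF Y]
  define Kd where "Kd = K3 * \<Phi> d / d^2"
  have Kd0: "Kd \<ge> 0" unfolding Kd_def using K3pos Pnn[of d] d by simp
  have pt: "\<Phi> t \<le> \<Phi> d + Kd * t^2" if t: "t \<ge> 0" for t
  proof (cases "t \<le> d")
    case True
    then have "\<Phi> t \<le> \<Phi> d" using t by (intro Pmono) auto
    moreover have "0 \<le> Kd * t^2" using Kd0 by simp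
    ultimately show ?thesis by linarith
  next
    case False
    have "\<Phi> t = \<Phi> ((t/d) * d)" using d by simp
    also have "\<dots> \<le> K3 * (t/d)^2 * \<Phi> d" using False d by (intro K3) auto
    also have "\<dots> = Kd * t^2" unfolding Kd_def by (simp add: power_divide)
    finally show ?thesis using Pnn[of d] d by simp
  qed
  define G where "G x = \<Phi> d + (Kd / s^2) * (norm (F x))^2" for x
  have iF2: "integrable TM (\<lambda>x. (norm (F x))^2)"
    by (rule bounded_int[where B="B^2"]) (use Fb in \<open>auto intro: power_mono\<close>)
  have iG: "integrable TM G" unfolding G_def
    using iF2 by (intro Bochner_Integration.integrable_add integrable_mult_right) (auto intro: fin_TM finite_measure.integrable_const)
  have "orlicz_modular \<Phi> (\<lambda>x. F x / of_real s) = (\<integral>\<^sup>+x. ennreal (\<Phi> (norm (F x / of_real s))) \<partial>TM)"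
    by (rule nn_TM)
  also have "\<dots> \<le> (\<integral>\<^sup>+x. ennreal (G x) \<partial>TM)"
  proof (rule nn_integral_mono)
    fix x
    have "\<Phi> (norm (F x / of_real s)) = \<Phi> (norm (F x) / s)" using s by (simp add: norm_divide)
    also have "\<dots> \<le> \<Phi> d + Kd * (norm (F x) / s)^2" using s by (intro pt) auto
    also have "\<dots> = G x" unfolding G_def by (simp add: power_divide)
    finally show "ennreal (\<Phi> (norm (F x / of_real s))) \<le> ennreal (G x)" by (rule ennreal_leI)
  qed
  also have "\<dots> = ennreal (integral\<^sup>L TM G)"
    by (rule nn_integral_eq_integral[OF iG]) (use Pnn[of d] d Kd0 s in \<open>auto simp: G_def\<close>)
  finally have M1: "orlicz_modular \<Phi> (\<lambda>x. F x / of_real s) \<le> ennreal (integral\<^sup>L TM G)" .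
  have "integral\<^sup>L TM G = 2*pi*\<Phi> d + (Kd / s^2) * integral\<^sup>L TM (\<lambda>x. (norm (F x))^2)"
  proof -
    have "integral\<^sup>L TM G = integral\<^sup>L TM (\<lambda>x. \<Phi> d) + integral\<^sup>L TM (\<lambda>x. (Kd / s^2) * (norm (F x))^2)"
      unfolding G_def
      by (rule Bochner_Integration.integral_add) (use iF2 in \<open>auto intro: fin_TM finite_measure.integrable_const\<close>)
    then show ?thesis using measure_TM by (simp add: mult.commute)
  qed
  also have "2*pi*\<Phi> d + (Kd / s^2) * integral\<^sup>L TM (\<lambda>x. (norm (F x))^2) \<le> 1/2 + 1/2"
  proof -
    have "(Kd / s^2) * integral\<^sup>L TM (\<lambda>x. (norm (F x))^2) \<le> (Kd / s^2) * V"
      using FV Kd0 s by (intro mult_left_mono) auto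
    also have "\<dots> \<le> 1/2" using KV unfolding Kd_def by simp
    finally show ?thesis using Pd by linarith
  qed
  finally have "integral\<^sup>L TM G \<le> 1" by simp
  then have "ennreal (integral\<^sup>L TM G) \<le> 1" by (metis ennreal_1 ennreal_leI)
  with M1 show ?thesis by (rule order_trans)
qed

lemma lux_le:
  assumes "s > 0" "orlicz_modular \<Phi> (\<lambda>x. F x / of_real s) \<le> 1"
  shows "luxemburg_norm \<Phi> F \<le> s"
  unfolding luxemburg_norm_def
  by (rule cInf_lower) (use assms in \<open>auto intro: bdd_belowI[where m=0]\<close>)

lemma lux_space:
  assumes Y: "young_function \<Phi>" and g: "g \<in> orlicz_space \<Phi>"
  shows "luxemburg_norm \<Phi> g \<ge> 0"
    "\<And>l. l > luxemburg_norm \<Phi> g \<Longrightarrow> orlicz_modular \<Phi> (\<lambda>x. g x / of_real l) \<le> 1"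
proof -
  note Pmono = yf_props(2)[OF Y]
  define S where "S = {l. l > 0 \<and> orlicz_modular \<Phi> (\<lambda>x. g x / of_real l) \<le> 1}"
  have ne: "S \<noteq> {}" using g unfolding orlicz_space_def S_def by auto
  have bdd: "bdd_below S" unfolding S_def by (auto intro: bdd_belowI[where m=0])
  show "luxemburg_norm \<Phi> g \<ge> 0" unfolding luxemburg_norm_def S_def[symmetric]
    using ne by (intro cInf_greatest) (auto simp: S_def)
  fix l assume l: "l > luxemburg_norm \<Phi> g"
  then have "Inf S < l" unfolding luxemburg_norm_def S_def .
  then obtain l' where l': "l' \<in> S" "l' < l" using cInf_less_iff[OF ne bdd] by auto
  then have l'0: "l' > 0" and m': "orlicz_modular \<Phi> (\<lambda>x. g x / of_real l') \<le> 1" unfolding S_def by auto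
  have "orlicz_modular \<Phi> (\<lambda>x. g x / of_real l) \<le> orlicz_modular \<Phi> (\<lambda>x. g x / of_real l')"
    unfolding nn_TM
  proof (rule nn_integral_mono, rule ennreal_leI)
    fix x
    have "norm (g x) / l \<le> norm (g x) / l'" using l' l'0 by (intro divide_left_mono) auto
    then show "\<Phi> (norm (g x / of_real l)) \<le> \<Phi> (norm (g x / of_real l'))"
      using l' l'0 by (simp add: norm_divide Pmono)
  qed
  with m' show "orlicz_modular \<Phi> (\<lambda>x. g x / of_real l) \<le> 1" by simp
qed

lemma ps_scale: "partial_sum A (\<lambda>x. g x / of_real l) x = partial_sum A g x / of_real l"
proof -
  have "fourier_coeff (\<lambda>x. g x / of_real l) n = fourier_coeff g n / of_real l" for n
  proof -
    have "integral\<^sup>L TM (\<lambda>x. g x / of_real l * cnj (ee n x)) = integral\<^sup>L TM (\<lambda>x. g x * cnj (ee n x) / of_real l)"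
      by simp
    also have "\<dots> = integral\<^sup>L TM (\<lambda>x. g x * cnj (ee n x)) / of_real l" by (rule integral_divide_zero)
    finally show ?thesis unfolding fc_TM by simp
  qed
  then show ?thesis unfolding partial_sum_def by (simp add: sum_divide_distrib)
qed




theorem lemma5p5:
  fixes p \<alpha> c :: real
  assumes hp: "(1 < p \<and> p < 2) \<or> (p = 2 \<and> \<alpha> \<le> 0)"
    and hc: "c > 1" and hY: "young_function (PhiLlog p \<alpha> c)"
  shows "\<exists>C>0. \<forall>N::nat. N \<ge> 1 \<longrightarrow>
           (\<forall>A::int set. finite A \<and> card A \<le> N \<longrightarrow>
             (\<forall>g \<in> orlicz_space (PhiLlog p \<alpha> c).
                luxemburg_norm (PhiLlog p \<alpha> c) (partial_sum A g)
                  \<le> C * real N powr (1 / p - 1 / 2) * (ln (exp 1 + real N)) powr (- \<alpha>)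
                    * luxemburg_norm (PhiLlog p \<alpha> c) g))"
proof -
  define \<Phi> where "\<Phi> = PhiLlog p \<alpha> c"
  have Y: "young_function \<Phi>" unfolding \<Phi>_def by (rule hY)
  note Pz = yf_props(1)[OF Y] and Pmono = yf_props(2)[OF Y] and Pnn = yf_props(3)[OF Y]
    and Pcont = yf_props(4)[OF Y]
  have p1: "p > 1" using hp by auto
  obtain K3 where K3pos: "K3 > 0" and K3: "\<And>r t. r \<ge> 1 \<Longrightarrow> t \<ge> 0 \<Longrightarrow> \<Phi> (r*t) \<le> K3 * r^2 * \<Phi> t"
    using Phi_A3[OF hp hc] unfolding \<Phi>_def by blast
  obtain K4 where K4pos: "K4 > 0"
    and K4: "\<And>N::real. N \<ge> 1 \<Longrightarrow> N \<le> \<Phi> (K4 * N powr (1/p) * ln (exp 1 + N) powr (-\<alpha>))"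
    using Phi_A4[OF hp hc] unfolding \<Phi>_def by blast
  obtain d where d: "d > 0" and Pd: "2*pi*\<Phi> d \<le> 1/2"
  proof -
    have "\<exists>e>0. \<forall>x'\<in>{0..}. dist x' 0 < e \<longrightarrow> dist (\<Phi> x') (\<Phi> 0) < 1/(4*pi)"
      using Pcont unfolding continuous_on_iff by (metis atLeast_iff order_refl divide_pos_pos
          pi_gt_zero mult_pos_pos zero_less_numeral zero_less_one)
    then obtain e where e: "e > 0" and he: "\<And>x'. x' \<ge> 0 \<Longrightarrow> dist x' 0 < e \<Longrightarrow> dist (\<Phi> x') (\<Phi> 0) < 1/(4*pi)"
      by auto
    have "dist (\<Phi> (e/2)) (\<Phi> 0) < 1/(4*pi)" using e by (intro he) auto
    then have "\<Phi> (e/2) < 1/(4*pi)" using Pz by (simp add: dist_real_def)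
    then have "2*pi*\<Phi> (e/2) \<le> 1/2" by (simp add: field_simps)
    then show ?thesis using that[of "e/2"] e by simp
  qed
  define Kd where "Kd = K3 * \<Phi> d / d^2"
  have Kd0: "Kd \<ge> 0" unfolding Kd_def using K3pos Pnn[of d] d by simp
  define K5 where "K5 = 1/pi + 2*K3"
  have K5pos: "K5 > 0" unfolding K5_def using K3pos by (simp add: add_pos_pos)
  define C where "C = sqrt (2 * Kd * K5 * K4^2) + 1"
  have nn0: "0 \<le> 2 * Kd * K5 * K4^2" using Kd0 K5pos by simp
  then have "sqrt (2 * Kd * K5 * K4^2) \<ge> 0" by simp
  then have Cpos: "C > 0" unfolding C_def by linarith
  have C2: "2 * Kd * K5 * K4^2 \<le> C^2"
  proof -
    have "2 * Kd * K5 * K4^2 = (sqrt (2 * Kd * K5 * K4^2))^2" using real_sqrt_pow2[OF nn0] by simp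
    also have "\<dots> \<le> C^2" unfolding C_def using nn0 by (intro power_mono) auto
    finally show ?thesis .
  qed
  have main: "luxemburg_norm \<Phi> (partial_sum A g)
      \<le> C * real N powr (1 / p - 1 / 2) * (ln (exp 1 + real N)) powr (- \<alpha>) * luxemburg_norm \<Phi> g"
    if N1: "N \<ge> 1" and A: "finite A" "card A \<le> N" and g: "g \<in> orlicz_space \<Phi>" for N :: nat and A g
  proof -
    define Nr where "Nr = real N"
    have Nr: "Nr \<ge> 1" unfolding Nr_def using N1 by simp
    define L where "L = ln (exp 1 + Nr)"
    have cardN: "real (card A) \<le> Nr" unfolding Nr_def using A(2) by simp
    have L1: "L \<ge> 1" using L_facts[OF Nr] unfolding L_def by simp
    define Q where "Q = Nr powr (1 / p - 1 / 2) * L powr (- \<alpha>)"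
    have Qpos: "Q > 0" unfolding Q_def using Nr L1 by simp
    define M where "M = luxemburg_norm \<Phi> g"
    have M0: "M \<ge> 0" unfolding M_def by (rule lux_space(1)[OF Y g])
    have gm: "g \<in> borel_measurable lborel" using g unfolding orlicz_space_def by auto
    have key: "luxemburg_norm \<Phi> (partial_sum A g) \<le> C * Q * l" if l: "l > M" for l
    proof -
      have l0: "l > 0" using l M0 by simp
      define h where "h x = g x / of_real l" for x
      have hm[measurable]: "h \<in> borel_measurable TM" unfolding h_def using meas_TM[OF gm] by measurable
      have hP: "(\<integral>\<^sup>+x. ennreal (\<Phi> (norm (h x))) \<partial>TM) \<le> 1"
        using lux_space(2)[OF Y g, of l] l unfolding M_def h_def nn_TM by simp
      define lam where "lam = K4 * Nr powr (1/p) * L powr (-\<alpha>)"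
      have lampos: "lam > 0" unfolding lam_def using K4pos Nr L1 by simp
      have PhiN: "\<Phi> lam \<ge> Nr" unfolding lam_def L_def using K4[OF Nr] .
      have lamQ: "lam = K4 * Q * sqrt Nr"
      proof -
        have "Nr powr (1/p) = Nr powr (1/p - 1/2) * Nr powr (1/2)" using Nr by (simp add: powr_add[symmetric])
        then show ?thesis unfolding lam_def Q_def using Nr by (simp add: powr_half_sqrt)
      qed
      have lam2: "lam^2 / Nr = K4^2 * Q^2" unfolding lamQ using Nr by (simp add: power_mult_distrib)
      have L2: "integral\<^sup>L TM (\<lambda>x. (norm (partial_sum A h x))^2) \<le> K5 * lam^2 / Nr"
        unfolding K5_def
        by (rule core_L2[OF Y K3 K3pos hm hP lampos Nr PhiN A(1)]) (use cardN in auto)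
      then have L2': "integral\<^sup>L TM (\<lambda>x. (norm (partial_sum A h x))^2) \<le> K5 * K4^2 * Q^2"
      proof -
        have "K5 * lam^2 / Nr = K5 * (lam^2 / Nr)" by simp
        then show ?thesis using L2 lam2 by (simp add: mult.assoc)
      qed
      have Fm: "partial_sum A h \<in> borel_measurable TM" unfolding ps_ee by measurable
      have Fb: "norm (partial_sum A h x) \<le> (\<Sum>n\<in>A. norm (fourier_coeff h n))" for x
        unfolding ps_ee by (rule order_trans[OF norm_sum]) (simp add: norm_mult)
      have KV: "(K3 * \<Phi> d / d^2) * (K5 * K4^2 * Q^2) / (C*Q)^2 \<le> 1/2"
      proof -
        have "(K3 * \<Phi> d / d^2) * (K5 * K4^2 * Q^2) / (C*Q)^2 = Kd * K5 * K4^2 / C^2"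
          unfolding Kd_def using Qpos by (simp add: power_mult_distrib field_simps)
        also have "\<dots> \<le> 1/2" using C2 Cpos by (simp add: field_simps)
        finally show ?thesis .
      qed
      have mod1: "orlicz_modular \<Phi> (\<lambda>x. partial_sum A h x / of_real (C*Q)) \<le> 1"
        by (rule conv_mod[OF Y K3 K3pos d Pd Fm Fb L2' _ KV]) (use Cpos Qpos in \<open>auto intro: mult_pos_pos\<close>)
      have "(\<lambda>x. partial_sum A g x / of_real (C*Q*l)) = (\<lambda>x. partial_sum A h x / of_real (C*Q))"
        unfolding h_def ps_scale using l0 by (simp add: field_simps)
      then have "orlicz_modular \<Phi> (\<lambda>x. partial_sum A g x / of_real (C*Q*l)) \<le> 1" using mod1 by simp
      then show ?thesis by (rule lux_le[rotated]) (use Cpos Qpos l0 in simp)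
    qed
    have "luxemburg_norm \<Phi> (partial_sum A g) \<le> C * Q * M"
    proof (rule field_le_epsilon)
      fix e :: real assume e: "e > 0"
      have "luxemburg_norm \<Phi> (partial_sum A g) \<le> C * Q * (M + e/(C*Q))"
        using e Cpos Qpos by (intro key) simp
      also have "\<dots> = C * Q * M + e" using Cpos Qpos by (simp add: field_simps)
      finally show "luxemburg_norm \<Phi> (partial_sum A g) \<le> C * Q * M + e" .
    qed
    then show ?thesis unfolding Q_def M_def L_def Nr_def by (simp add: mult.assoc)
  qed
  show ?thesis using Cpos main unfolding \<Phi>_def by blast
qed


end
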